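(* Let $r\ge 1$ and let $x_0,y_0$ be positive integers. Let $p_r(x_0,y_0;x,y)$ denote the probability that the CA competition process with fitness ratio $r$ started at $(x_0,y_0)$ is at state $(x,y)$ at time $x+y-x_0-y_0$. Then for all integers $k\ge0$, $h\ge0$, \[ p_r(x_0,y_0;x_0+k,y_0+h)\ \ge\ \frac{(x_0)_k\,(y_0)_h}{(rx_0+y_0)_{k+h}}\binom{k+h}{k}. \]
   Context: The CA competition process with fitness ratio $r\ge 1$ started at $(x_0,y_0)$ is the discrete-time Markov chain $\{(X_t,Y_t)\}_{t\ge0}$ on $\{(x,y)\in\mathbb{Z}^2: x\ge1,y\ge1\}$ with $(X_0,Y_0)=(x_0,y_0)$ and transition probabilities: from $(x,y)$ it moves to $(x+1,y)$ with probability $\frac{rx}{rx+y}$ and to $(x,y+1)$ with probability $\frac{y}{rx+y}$. $(x)_k=\prod_{i=0}^{k-1}(x+i)$ denotes the Pochhammer symbol (with $(x)_0=1$). *)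

theory Defs
  imports "HOL-Probability.Probability"
begin

definition ca_step :: "real \<Rightarrow> nat \<times> nat \<Rightarrow> (nat \<times> nat) pmf" where
  "ca_step r s = (case s of (x, y) \<Rightarrow>
     map_pmf (\<lambda>b. if b then (x + 1, y) else (x, y + 1))
       (bernoulli_pmf (r * real x / (r * real x + real y))))"

fun ca_dist :: "real \<Rightarrow> nat \<times> nat \<Rightarrow> nat \<Rightarrow> (nat \<times> nat) pmf" where
  "ca_dist r s 0 = return_pmf s"
| "ca_dist r s (Suc t) = bind_pmf (ca_dist r s t) (ca_step r)"

definition ca_prob :: "real \<Rightarrow> nat \<Rightarrow> nat \<Rightarrow> nat \<Rightarrow> nat \<Rightarrow> real" where
  "ca_prob r x0 y0 x y = pmf (ca_dist r (x0, y0) (x + y - x0 - y0)) (x, y)"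

end

theory Submission
  imports Defs
begin

lemma step_x:
  assumes "r \<ge> 1" "x \<ge> 1" "y \<ge> 1"
  shows "pmf (ca_step r (x,y)) (x+1, y) = r*x/(r*x+y)"
proof -
  let ?g = "\<lambda>b. if b then (x + 1, y) else (x, y + 1)"
  have inj: "inj ?g" by (auto simp: inj_def split: if_splits)
  have q0: "r*x \<ge> 0" "real y \<ge> 1" using assms by auto
  have q: "r*x \<ge> 0" "r*x+y > 0" using q0 by linarith+
  have p: "0 \<le> r*x/(r*x+y)" "r*x/(r*x+y) \<le> 1" using q by (auto simp: divide_le_eq_1)
  note t = pmf_map_inj'[OF inj, of "bernoulli_pmf (r*x/(r*x+y))" True]
  show ?thesis using t p by (simp add: ca_step_def)
qed

lemma step_y:
  assumes "r \<ge> 1" "x \<ge> 1" "y \<ge> 1"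
  shows "pmf (ca_step r (x,y)) (x, y+1) = y/(r*x+y)"
proof -
  let ?g = "\<lambda>b. if b then (x + 1, y) else (x, y + 1)"
  have inj: "inj ?g" by (auto simp: inj_def split: if_splits)
  have q0: "r*x \<ge> 0" "real y \<ge> 1" using assms by auto
  have q: "r*x \<ge> 0" "r*x+y > 0" using q0 by linarith+
  have p: "0 \<le> r*x/(r*x+y)" "r*x/(r*x+y) \<le> 1" using q by (auto simp: divide_le_eq_1)
  note t = pmf_map_inj'[OF inj, of "bernoulli_pmf (r*x/(r*x+y))" False]
  have "pmf (ca_step r (x,y)) (x, y+1) = 1 - r*x/(r*x+y)"
    using t p by (simp add: ca_step_def)
  also have "\<dots> = y/(r*x+y)" using q by (simp add: field_simps)
  finally show ?thesis by simp
qed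

lemma key:
  fixes r D a b X Y c1 c2 :: real
  assumes "r \<ge> 1" "D > 0" "a \<ge> 0" "b \<ge> 0" "X > 0" "Y > 0" "c1 \<ge> 0" "c2 \<ge> 0"
    "c1*(b+1) = c2*(a+1)"
  shows "X*Y*(c1+c2)/(D+a+b+1) \<le> Y*c1*(r*X/(D+r*a+b+1)) + X*c2*(Y/(D+r*a+r+b))"
proof -
  have ra: "r*a \<ge> 0" using assms by auto
  have d1: "D+r*a+b+1 > 0" "D+a+b+1 > 0" "D+r*a+r+b > 0" using assms ra by linarith+
  have ineq: "(b+1)/(D+r*a+r+b) \<le> (D+b+1)/(D+r*a+b+1)"
    using assms d1 by (intro frac_le) (auto simp: mult_left_mono)
  have e1: "r/(D+r*a+b+1) - 1/(D+a+b+1) = (r-1)*(D+b+1)/((D+r*a+b+1)*(D+a+b+1))"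
    using d1 by (simp add: field_simps)
  have e2: "1/(D+a+b+1) - 1/(D+r*a+r+b) = (r-1)*(a+1)/((D+r*a+r+b)*(D+a+b+1))"
    using d1 by (simp add: field_simps)
  have "c2*(1/(D+a+b+1) - 1/(D+r*a+r+b)) \<le> c1*(r/(D+r*a+b+1) - 1/(D+a+b+1))"
  proof -
    have b1: "b+1 \<noteq> 0" using assms by linarith
    have "c2*(1/(D+a+b+1) - 1/(D+r*a+r+b)) = c2*(a+1) * ((r-1)/(D+a+b+1)) * ((b+1)/(D+r*a+r+b)) / (b+1)"
      unfolding e2 using b1 by (simp add: divide_simps)
    also have "\<dots> = c1 * ((r-1)/(D+a+b+1)) * ((b+1)/(D+r*a+r+b))"
      using assms(4) by (simp flip: assms(9))
    also have "\<dots> \<le> c1 * ((r-1)/(D+a+b+1)) * ((D+b+1)/(D+r*a+b+1))"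
      using assms d1 ineq by (intro mult_left_mono) auto
    also have "\<dots> = c1*(r/(D+r*a+b+1) - 1/(D+a+b+1))"
      unfolding e1 by (simp add: field_simps)
    finally show ?thesis .
  qed
  hence H: "c2*(1/(D+a+b+1)) - c2*(1/(D+r*a+r+b)) \<le> c1*(r/(D+r*a+b+1)) - c1*(1/(D+a+b+1))"
    by (simp only: right_diff_distrib)
  have "(c1+c2)/(D+a+b+1) = c1*(1/(D+a+b+1)) + c2*(1/(D+a+b+1))"
    by (simp add: add_divide_distrib)
  hence "(c1+c2)/(D+a+b+1) \<le> c1*(r/(D+r*a+b+1)) + c2*(1/(D+r*a+r+b))"
    using H by linarith
  hence "X*Y*((c1+c2)/(D+a+b+1)) \<le> X*Y*(c1*(r/(D+r*a+b+1)) + c2*(1/(D+r*a+r+b)))"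
    using assms by (intro mult_left_mono) auto
  thus ?thesis by (simp add: algebra_simps)
qed

lemma bind_ge:
  assumes "finite A"
  shows "(\<Sum>s\<in>A. pmf M s * pmf (f s) z) \<le> pmf (bind_pmf M f) z"
proof -
  have "ennreal (\<Sum>s\<in>A. pmf M s * pmf (f s) z) = (\<Sum>s\<in>A. ennreal (pmf M s * pmf (f s) z))"
    by (rule sum_ennreal[symmetric]) simp
  also have "\<dots> = (\<Sum>s\<in>A. ennreal (pmf (f s) z) * emeasure (measure_pmf M) {s})"
  proof (rule sum.cong[OF refl])
    fix s
    have "ennreal (pmf (f s) z * pmf M s) = ennreal (pmf (f s) z) * ennreal (pmf M s)"
      by (rule ennreal_mult) simp_all
    thus "ennreal (pmf M s * pmf (f s) z) = ennreal (pmf (f s) z) * emeasure (measure_pmf M) {s}"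
      by (simp only: emeasure_pmf_single mult.commute[of "pmf M s"])
  qed
  also have "\<dots> = (\<integral>\<^sup>+s. ennreal (pmf (f s) z) * indicator A s \<partial>measure_pmf M)"
    by (rule nn_integral_indicator_finite[symmetric]) (auto simp: assms)
  also have "\<dots> \<le> (\<integral>\<^sup>+s. ennreal (pmf (f s) z) \<partial>measure_pmf M)"
    by (intro nn_integral_mono) (auto simp: indicator_def)
  also have "\<dots> = ennreal (pmf (bind_pmf M f) z)"
    by (simp add: ennreal_pmf_bind)
  finally show ?thesis by (simp add: ennreal_le_iff)
qed

definition Bnd :: "real \<Rightarrow> nat \<Rightarrow> nat \<Rightarrow> nat \<Rightarrow> nat \<Rightarrow> real" where
  "Bnd r x0 y0 k h = pochhammer (real x0) k * pochhammer (real y0) h / pochhammer (r * real x0 + real y0) (k + h)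
      * real ((k + h) choose k)"

lemma main:
  assumes r: "r \<ge> 1" and x0: "x0 \<ge> 1" and y0: "y0 \<ge> 1"
  shows "\<forall>k h. k + h = n \<longrightarrow> Bnd r x0 y0 k h \<le> pmf (ca_dist r (x0,y0) n) (x0+k, y0+h)"
proof (induction n)
  case 0
  then show ?case by (simp add: Bnd_def)
next
  case (Suc n)
  note IHn = Suc.IH
  define D where "D = r * real x0 + real y0"
  have rx: "r * real x0 \<ge> 0" using r by simp
  have Dpos: "D > 0" unfolding D_def using rx y0 by linarith
  let ?M = "ca_dist r (x0,y0) n"
  show ?case
  proof (intro allI impI)
    fix k h assume kh: "k + h = Suc n"
    show "Bnd r x0 y0 k h \<le> pmf (ca_dist r (x0,y0) (Suc n)) (x0+k, y0+h)"
    proof (cases k)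
      case 0
      then have h: "h = Suc n" using kh by simp
      have IH: "Bnd r x0 y0 0 n \<le> pmf ?M (x0, y0+n)" using IHn[rule_format, of 0 n] by simp
      have st: "pmf (ca_step r (x0, y0+n)) (x0, y0+n+1) = (y0+n)/(D+n)"
        using step_y[OF r x0, of "y0+n"] y0 by (simp add: D_def add.assoc)
      have eq: "Bnd r x0 y0 0 (Suc n) = Bnd r x0 y0 0 n * ((y0+n)/(D+n))"
        by (simp add: Bnd_def pochhammer_Suc D_def[symmetric])
      have "Bnd r x0 y0 0 n * ((y0+n)/(D+n)) \<le> pmf ?M (x0, y0+n) * ((y0+n)/(D+n))"
        using IH Dpos by (intro mult_right_mono) auto
      also have "\<dots> \<le> pmf (ca_dist r (x0,y0) (Suc n)) (x0, y0+Suc n)"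
        using bind_ge[of "{(x0,y0+n)}" ?M "ca_step r" "(x0, y0+Suc n)"] st by simp
      finally show ?thesis using eq h 0 by simp
    next
      case (Suc a)
      show ?thesis
      proof (cases h)
        case 0
        then have ka: "a = n" using kh Suc by simp
        have IH: "Bnd r x0 y0 n 0 \<le> pmf ?M (x0+n, y0)" using IHn[rule_format, of n 0] by simp
        have st0: "pmf (ca_step r (x0+n, y0)) (x0+n+1, y0) = r*(x0+n)/(r*(x0+n)+y0)"
          using step_x[OF r _ y0, of "x0+n"] x0 by simp
        have "r*(x0+n)+y0 = D+r*n" unfolding D_def by (simp add: algebra_simps)
        hence st: "pmf (ca_step r (x0+n, y0)) (x0+Suc n, y0) = r*(x0+n)/(D+r*n)"
          using st0 by simp
        have eq: "Bnd r x0 y0 (Suc n) 0 = Bnd r x0 y0 n 0 * ((x0+n)/(D+n))"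
          by (simp add: Bnd_def pochhammer_Suc D_def[symmetric])
        have rn: "r * real n \<ge> 0" using r by simp
        have le: "(x0+n)/(D+n) \<le> r*(x0+n)/(D+r*n)"
        proof -
          have p1: "D + r*n > 0" "D + n > 0" using Dpos rn by linarith+
          have "D + r*n \<le> r*D + r*n" using Dpos r by (simp add: mult_right_mono)
          hence "(x0+n)*(D + r*n) \<le> (x0+n)*(r*(D+n))" by (intro mult_left_mono) (auto simp: algebra_simps)
          thus ?thesis using p1 by (simp add: divide_simps algebra_simps)
        qed
        have "Bnd r x0 y0 (Suc n) 0 \<le> pmf ?M (x0+n, y0) * (r*(x0+n)/(D+r*n))"
          unfolding eq using IH le Dpos by (intro mult_mono) auto
        also have "\<dots> = pmf ?M (x0+n,y0) * pmf (ca_step r (x0+n,y0)) (x0+Suc n, y0)"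
          by (simp only: st)
        also have "\<dots> \<le> pmf (bind_pmf ?M (ca_step r)) (x0 + Suc n, y0)"
          using bind_ge[of "{(x0+n,y0)}" ?M "ca_step r" "(x0 + Suc n, y0)"] by simp
        also have "\<dots> = pmf (ca_dist r (x0,y0) (Suc n)) (x0 + Suc n, y0)" by simp
        finally show ?thesis using ka Suc 0 by simp
      next
        case (Suc b)
        note ka = \<open>k = Suc a\<close>
        have nab: "n = Suc (a+b)" using kh ka Suc by simp
        have IH1: "Bnd r x0 y0 a (Suc b) \<le> pmf ?M (x0+a, y0+Suc b)"
          using IHn[rule_format, of a "Suc b"] nab by simp
        have IH2: "Bnd r x0 y0 (Suc a) b \<le> pmf ?M (x0+Suc a, y0+b)"
          using IHn[rule_format, of "Suc a" b] nab by simp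
        have ra: "r * real a \<ge> 0" using r by simp
        have E1: "D + r*a + b + 1 > 0" "D + r*a + r + b > 0" using Dpos ra r by linarith+
        have st1: "pmf (ca_step r (x0+a, y0+Suc b)) (x0+Suc a, y0+Suc b) = r*(x0+a)/(D+r*a+b+1)"
        proof -
          have "pmf (ca_step r (x0+a, y0+Suc b)) (x0+a+1, y0+Suc b) = r*(x0+a)/(r*(x0+a)+(y0+Suc b))"
            using step_x[OF r, of "x0+a" "y0+Suc b"] x0 by simp
          moreover have "r*(x0+a)+(y0+Suc b) = D+r*a+b+1" unfolding D_def by (simp add: algebra_simps)
          ultimately show ?thesis by simp
        qed
        have st2: "pmf (ca_step r (x0+Suc a, y0+b)) (x0+Suc a, y0+Suc b) = (y0+b)/(D+r*a+r+b)"
        proof -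
          have "pmf (ca_step r (x0+Suc a, y0+b)) (x0+Suc a, y0+b+1) = (y0+b)/(r*(x0+Suc a)+(y0+b))"
            using step_y[OF r, of "x0+Suc a" "y0+b"] y0 by simp
          moreover have "r*(x0+Suc a)+(y0+b) = D+r*a+r+b" unfolding D_def by (simp add: algebra_simps)
          ultimately show ?thesis by simp
        qed
        define P where "P = pochhammer (real x0) a"
        define Q where "Q = pochhammer (real y0) b"
        define R where "R = pochhammer D (Suc (a+b))"
        define c1 where "c1 = real (Suc (a+b) choose a)"
        define c2 where "c2 = real (Suc (a+b) choose Suc a)"
        have Ppos: "P > 0" unfolding P_def using x0 by (intro pochhammer_pos) auto
        have Qpos: "Q > 0" unfolding Q_def using y0 by (intro pochhammer_pos) auto
        have Rpos: "R > 0" unfolding R_def using Dpos by (intro pochhammer_pos) auto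
        have cc: "c1*(real b+1) = c2*(real a+1)"
        proof -
          have "Suc a * (Suc (a + b) choose Suc a) = Suc b * (Suc (a + b) choose a)"
            by (rule Suc_times_binomial_add)
          hence "real (Suc a * (Suc (a + b) choose Suc a)) = real (Suc b * (Suc (a + b) choose a))"
            by simp
          thus ?thesis unfolding c1_def c2_def by (simp add: algebra_simps)
        qed
        have B0: "Bnd r x0 y0 (Suc a) (Suc b) = (P*Q/R) * ((x0+a)*(y0+b)*(c1+c2)/(D+a+b+1))"
        proof -
          have "Suc a + Suc b = Suc (Suc (a+b))" by simp
          hence "Bnd r x0 y0 (Suc a) (Suc b) = P*(x0+a)*(Q*(y0+b)) / (R*(D+Suc (a+b))) * (c1+c2)"
            unfolding Bnd_def P_def Q_def R_def c1_def c2_def D_def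
            by (simp only: pochhammer_Suc binomial_Suc_Suc of_nat_add)
          thus ?thesis by (simp add: field_simps)
        qed
        have B1: "Bnd r x0 y0 a (Suc b) = (P*Q/R) * ((y0+b)*c1)"
        proof -
          have "a + Suc b = Suc (a+b)" by simp
          hence "Bnd r x0 y0 a (Suc b) = P*(Q*(y0+b)) / R * c1"
            unfolding Bnd_def P_def Q_def R_def c1_def c2_def D_def
            by (simp only: pochhammer_Suc of_nat_add)
          thus ?thesis by (simp add: field_simps)
        qed
        have B2: "Bnd r x0 y0 (Suc a) b = (P*Q/R) * ((x0+a)*c2)"
        proof -
          have "Suc a + b = Suc (a+b)" by simp
          hence "Bnd r x0 y0 (Suc a) b = P*(x0+a)*Q / R * c2"
            unfolding Bnd_def P_def Q_def R_def c1_def c2_def D_def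
            by (simp only: pochhammer_Suc of_nat_add)
          thus ?thesis by (simp add: field_simps)
        qed
        have c0: "c1 \<ge> 0" "c2 \<ge> 0" unfolding c1_def c2_def by auto
        have K: "(x0+a)*(y0+b)*(c1+c2)/(D+a+b+1) \<le> (y0+b)*c1*(r*(x0+a)/(D+r*a+b+1)) + (x0+a)*c2*((y0+b)/(D+r*a+r+b))"
        proof -
          have pos: "real x0 + real a > 0" "real y0 + real b > 0" using x0 y0 by linarith+
          have nn: "0 \<le> real a" "0 \<le> real b" by simp_all
          from key[of r D "real a" "real b" "real x0 + real a" "real y0 + real b" c1 c2, OF r Dpos nn pos c0 cc]
          show ?thesis by simp
        qed
        have F: "P*Q/R \<ge> 0" using Ppos Qpos Rpos by simp
        have "Bnd r x0 y0 (Suc a) (Suc b) \<le> (P*Q/R) * ((y0+b)*c1*(r*(x0+a)/(D+r*a+b+1)) + (x0+a)*c2*((y0+b)/(D+r*a+r+b)))"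
          unfolding B0 using K F by (intro mult_left_mono) auto
        also have "\<dots> = Bnd r x0 y0 a (Suc b) * (r*(x0+a)/(D+r*a+b+1)) + Bnd r x0 y0 (Suc a) b * ((y0+b)/(D+r*a+r+b))"
          unfolding B1 B2 by (simp only: distrib_left mult.assoc)
        also have "\<dots> \<le> pmf ?M (x0+a, y0+Suc b) * (r*(x0+a)/(D+r*a+b+1)) + pmf ?M (x0+Suc a, y0+b) * ((y0+b)/(D+r*a+r+b))"
          using IH1 IH2 E1 r by (intro add_mono mult_right_mono) auto
        also have "\<dots> = pmf ?M (x0+a, y0+Suc b) * pmf (ca_step r (x0+a, y0+Suc b)) (x0+Suc a, y0+Suc b)
             + pmf ?M (x0+Suc a, y0+b) * pmf (ca_step r (x0+Suc a, y0+b)) (x0+Suc a, y0+Suc b)"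
          by (simp only: st1 st2)
        also have "\<dots> \<le> pmf (bind_pmf ?M (ca_step r)) (x0+Suc a, y0+Suc b)"
          using bind_ge[of "{(x0+a, y0+Suc b), (x0+Suc a, y0+b)}" ?M "ca_step r" "(x0+Suc a, y0+Suc b)"] by simp
        also have "\<dots> = pmf (ca_dist r (x0,y0) (Suc n)) (x0+Suc a, y0+Suc b)" by simp
        finally show ?thesis using ka Suc by simp
      qed
    qed
  qed
qed

theorem lemma1:
  fixes r :: real and x0 y0 k h :: nat
  assumes "r \<ge> 1" and "x0 \<ge> 1" and "y0 \<ge> 1"
  shows "ca_prob r x0 y0 (x0 + k) (y0 + h) \<ge>
    pochhammer (real x0) k * pochhammer (real y0) h / pochhammer (r * real x0 + real y0) (k + h)
      * real ((k + h) choose k)"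
proof -
  have "Bnd r x0 y0 k h \<le> pmf (ca_dist r (x0,y0) (k+h)) (x0+k, y0+h)"
    using main[OF assms, of "k+h"] by blast
  moreover have "x0 + k + (y0 + h) - x0 - y0 = k + h" by simp
  ultimately show ?thesis unfolding ca_prob_def Bnd_def by (simp only:)
qed

end
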